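(* There exists $\alpha\in\mu_{p-1}\subset\mathbb Z_p$ such that for every prime number $\ell$ with $\ell\ge p^2$ and $\ell\equiv\alpha\pmod p$, and $\zeta_\ell$ a primitive $\ell$-th root of unity, $$\mathrm{Tr}_{\mathbb Q(\zeta_\ell)/\mathbb Q}\left(\frac{\zeta_\ell^{p+1}+\zeta_\ell^{p-1}}{(\zeta_\ell^p-1)^2}\right)\not\equiv 0\pmod p,$$ i.e. this rational number (which is $p$-integral) has $p$-adic valuation $0$.
   Context: $p\ge5$ is a prime; $\mu_{p-1}\subset\mathbb Z_p$ denotes the $(p-1)$-th roots of unity in $\mathbb Z_p$. *)

theory Defs
  imports Complex_Main "HOL-Computational_Algebra.Primes"
begin

definition prim_root_unity :: "nat \<Rightarrow> complex \<Rightarrow> bool" where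
  "prim_root_unity n z \<longleftrightarrow> 0 < n \<and> z ^ n = 1 \<and> (\<forall>k. 0 < k \<and> k < n \<longrightarrow> z ^ k \<noteq> 1)"

text \<open>Trace from Q(zeta_n) to Q of the element f(zeta_n), where zeta_n is a primitive
  n-th root of unity and f is a rational function with rational coefficients:
  the sum of the Galois conjugates f(zeta_n^k), k ranging over (Z/nZ)^*.\<close>
definition cyclo_trace :: "nat \<Rightarrow> complex \<Rightarrow> (complex \<Rightarrow> complex) \<Rightarrow> complex" where
  "cyclo_trace n \<zeta> f = (\<Sum>k | k < n \<and> coprime k n. f (\<zeta> ^ k))"

definition padic_unit :: "nat \<Rightarrow> rat \<Rightarrow> bool" where
  "padic_unit p q \<longleftrightarrow> \<not> int p dvd fst (quotient_of q) \<and> \<not> int p dvd snd (quotient_of q)"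

end

theory Submission
  imports Defs "HOL-Number_Theory.Number_Theory"
begin


lemma dvd_cancel1: "k dvd a \<Longrightarrow> k dvd (a - b) \<Longrightarrow> k dvd (b::int)"
  using dvd_diff[of k a "a-b"] by simp

lemma dvd_trans_diff: "k dvd (a - b) \<Longrightarrow> k dvd (b - c) \<Longrightarrow> k dvd (a - (c::int))"
  using dvd_add[of k "a-b" "b-c"] by simp

definition sqm :: "nat \<Rightarrow> int \<Rightarrow> bool" where
  "sqm p z \<longleftrightarrow> (\<exists>x::int. int p dvd (x^2 - z))"

lemma sqm_cong:
  assumes "sqm p z" "int p dvd (z - z')" shows "sqm p z'"
proof -
  obtain x where "int p dvd (x^2 - z)" using assms unfolding sqm_def by auto
  then have "int p dvd (x^2 - z')" using assms(2)
    using dvd_trans_diff by blast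
  then show ?thesis unfolding sqm_def by auto
qed

lemma sqm_cancel:
  assumes "prime p" "\<not> int p dvd y" "sqm p (y^2 * z)" shows "sqm p z"
proof -
  have pr: "prime (int p)" using assms(1) by simp
  have "coprime y (int p)" using prime_imp_coprime[OF pr assms(2)]
    by (simp add: coprime_commute)
  then obtain y' where yy: "[y * y' = 1] (mod int p)"
    using cong_solve_coprime_int by blast
  obtain x where x: "int p dvd (x^2 - y^2 * z)" using assms(3) unfolding sqm_def by auto
  have "int p dvd (y'^2 * (x^2 - y^2*z))" using x by simp
  moreover have "(y'^2 * (x^2 - y^2*z)) = (x*y')^2 - z - ((y*y')^2 - 1) * z"
    by (simp add: algebra_simps power2_eq_square)
  moreover have "int p dvd ((y*y')^2 - 1)"
  proof -
    have "[(y*y')^2 = 1^2] (mod int p)" using yy cong_pow by blast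
    then show ?thesis by (simp add: cong_iff_dvd_diff)
  qed
  ultimately have "int p dvd ((x*y')^2 - z)"
    by (metis dvd_add dvd_mult2 diff_add_cancel)
  then show ?thesis unfolding sqm_def by auto
qed

lemma sqm_step:
  assumes "prime p" and H: "\<forall>x::nat. 0 < x \<and> x < p \<longrightarrow> sqm p (int x^2 + 2)"
    and "sqm p m" "\<not> int p dvd m"
  shows "sqm p (m + 2)"
proof -
  obtain x where x: "int p dvd (x^2 - m)" using assms(3) unfolding sqm_def by auto
  have p0: "int p > 0" using assms(1) prime_gt_0_nat by auto
  define x0 where "x0 = nat (x mod int p)"
  have x0i: "int x0 = x mod int p" unfolding x0_def using p0 by simp
  have "x mod int p \<noteq> 0"
  proof
    assume "x mod int p = 0"
    then have "int p dvd x" by auto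
    then have "int p dvd x^2" by (simp add: power2_eq_square)
    then show False using x assms(4) dvd_cancel1 by blast
  qed
  then have "0 < x0" "x0 < p" using x0i p0
    by (smt (verit) of_nat_0_less_iff pos_mod_sign, smt (verit) Euclidean_Rings.pos_mod_bound of_nat_less_iff)
  then have s: "sqm p (int x0^2 + 2)" using H by auto
  have "[int x0 = x] (mod int p)" using x0i by (simp add: cong_def)
  then have "[int x0^2 = x^2] (mod int p)" using cong_pow by blast
  then have "int p dvd (int x0^2 - x^2)" by (simp add: cong_iff_dvd_diff)
  then have "int p dvd (int x0^2 - m)" using x dvd_trans_diff by blast
  then have "int p dvd ((int x0^2 + 2) - (m + 2))" by simp
  then show ?thesis using sqm_cong[OF s] by blast
qed

lemma exists_a:
  assumes "prime p" "p \<ge> 5"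
  shows "\<exists>a::nat. 0 < a \<and> a < p \<and> \<not> sqm p (3 * (int a^2 + 2))"
proof -
  have p0: "int p > 5 - 1" using assms by simp
  have pr: "prime (int p)" using assms by simp
  have nd: "\<not> int p dvd k" if "0 < k" "k < int p" for k::int
    using that zdvd_imp_le by fastforce
  show ?thesis
  proof (cases "sqm p 3")
    case False
    show ?thesis
    proof (cases "sqm p 2")
      case False
      have "\<not> sqm p (3 * (int 2^2 + 2))"
      proof
        assume "sqm p (3 * (int 2^2 + 2))"
        then have "sqm p (3^2 * 2)" by simp
        then have "sqm p 2" using sqm_cancel[OF assms(1), of 3 2] nd[of 3] p0 by simp
        then show False using False by simp
      qed
      then show ?thesis using assms(2) by (intro exI[of _ 2]) auto
    next
      case True
      then obtain s where s: "int p dvd (s^2 - 2)" unfolding sqm_def by auto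
      define a where "a = nat (s mod int p)"
      have ai: "int a = s mod int p" unfolding a_def using p0 by simp
      have "s mod int p \<noteq> 0"
      proof
        assume "s mod int p = 0"
        then have "int p dvd s" by auto
        then have "int p dvd s^2" by (simp add: power2_eq_square)
        then have "int p dvd 2" using s dvd_cancel1 by blast
        then show False using nd[of 2] p0 by simp
      qed
      then have a1: "0 < a" "a < p" using ai p0
        by (smt (verit) of_nat_0_less_iff pos_mod_sign, smt (verit) Euclidean_Rings.pos_mod_bound of_nat_less_iff)
      have "[int a = s] (mod int p)" using ai by (simp add: cong_def)
      then have "[int a^2 = s^2] (mod int p)" using cong_pow by blast
      then have "int p dvd (int a^2 - s^2)" by (simp add: cong_iff_dvd_diff)
      then have d: "int p dvd (int a^2 - 2)" using s dvd_trans_diff by blast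
      have "\<not> sqm p (3 * (int a^2 + 2))"
      proof
        assume h: "sqm p (3 * (int a^2 + 2))"
        have e: "3 * (int a^2 + 2) - 2^2 * 3 = 3 * (int a^2 - 2)" by simp
        have "int p dvd 3 * (int a^2 - 2)" using d by (rule dvd_mult)
        then have "int p dvd (3 * (int a^2 + 2) - 2^2 * 3)" unfolding e .
        then have "sqm p (2^2 * 3)" using sqm_cong[OF h] by blast
        then have "sqm p 3" using sqm_cancel[OF assms(1), of 2 3] nd[of 2] p0 by simp
        then show False using False by simp
      qed
      then show ?thesis using a1 by blast
    qed
  next
    case True
    then obtain y where y: "int p dvd (y^2 - 3)" unfolding sqm_def by auto
    have ny: "\<not> int p dvd y"
    proof
      assume "int p dvd y"
      then have "int p dvd y^2" by (simp add: power2_eq_square)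
      then have "int p dvd 3" using y dvd_cancel1 by blast
      then show False using nd[of 3] p0 by simp
    qed
    have "\<exists>x::nat. 0 < x \<and> x < p \<and> \<not> sqm p (int x^2 + 2)"
    proof (rule ccontr)
      assume "\<not> ?thesis"
      then have H: "\<forall>x::nat. 0 < x \<and> x < p \<longrightarrow> sqm p (int x^2 + 2)" by blast
      have odd: "2 * int i + 1 < int p \<longrightarrow> sqm p (2 * int i + 1)" for i
      proof (induction i)
        case 0
        then show ?case unfolding sqm_def by (auto intro: exI[of _ 1])
      next
        case (Suc i)
        show ?case
        proof
          assume "2 * int (Suc i) + 1 < int p"
          then have "2 * int i + 1 < int p" by simp
          then have "sqm p (2 * int i + 1)" "\<not> int p dvd (2 * int i + 1)" using Suc nd by auto
          then have "sqm p (2 * int i + 1 + 2)" using sqm_step[OF assms(1) H] by blast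
          then show "sqm p (2 * int (Suc i) + 1)" by (simp add: algebra_simps)
        qed
      qed
      have even: "2 * int i + 4 < int p \<longrightarrow> sqm p (2 * int i + 4)" for i
      proof (induction i)
        case 0
        then show ?case unfolding sqm_def by (auto intro: exI[of _ 2])
      next
        case (Suc i)
        show ?case
        proof
          assume "2 * int (Suc i) + 4 < int p"
          then have "2 * int i + 4 < int p" by simp
          then have "sqm p (2 * int i + 4)" "\<not> int p dvd (2 * int i + 4)" using Suc nd by auto
          then have "sqm p (2 * int i + 4 + 2)" using sqm_step[OF assms(1) H] by blast
          then show "sqm p (2 * int (Suc i) + 4)" by (simp add: algebra_simps)
        qed
      qed
      have all0: "sqm p m" if "0 < m" "m < int p" "m \<noteq> 2" for m
      proof (cases "even m")
        case True
        then have "m = 2 * ((m - 4) div 2) + 4" "(m - 4) div 2 \<ge> 0" using that by presburger+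
        then obtain i where "m = 2 * i + 4" "i \<ge> 0" by blast
        then have e: "2 * int (nat i) + 4 = m" by simp
        show ?thesis using even[of "nat i"] unfolding e using that(2) by blast
      next
        case False
        then have "m = 2 * ((m - 1) div 2) + 1" "(m - 1) div 2 \<ge> 0" using that by presburger+
        then obtain i where "m = 2 * i + 1" "i \<ge> 0" by blast
        then have e: "2 * int (nat i) + 1 = m" by simp
        show ?thesis using odd[of "nat i"] unfolding e using that(2) by blast
      qed
      have all: "sqm p m" if "0 < m" "m < int p" for m
      proof (cases "m = 2")
        case True
        have n6: "\<not> int p dvd 6"
        proof
          assume "int p dvd 6"
          then have "p dvd 6" by presburger
          then have "p \<le> 6" by (simp add: dvd_imp_le)
          then have "p = 5 \<or> p = 6" using assms(2) by auto
          then show False using \<open>p dvd 6\<close> assms(1) by auto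
        qed
        have "6 mod int p \<noteq> 0" using n6 by (simp add: dvd_eq_mod_eq_0)
        moreover have "0 \<le> 6 mod int p" using p0 by simp
        ultimately have "0 < 6 mod int p" by linarith
        moreover have "6 mod int p < int p" using p0 by simp
        moreover have "6 mod int p \<noteq> 2"
        proof
          assume "6 mod int p = 2"
          moreover have "int p dvd 6 - 6 mod int p" by (simp add: minus_mod_eq_mult_div)
          ultimately have "int p dvd 6 - 2" by simp
          then show False using nd[of 4] p0 by simp
        qed
        ultimately have "sqm p (6 mod int p)" using all0 by blast
        then have "sqm p (y^2 * 2)"
        proof (rule sqm_cong)
          have "6 mod int p - y^2 * 2 = (6 mod int p - 6) - 2 * (y^2 - 3)" by simp
          moreover have "int p dvd (6 mod int p - 6)"
          proof -
            have "int p dvd 6 - 6 mod int p" by (simp add: minus_mod_eq_mult_div)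
            then show ?thesis using dvd_diff_commute by blast
          qed
          moreover have "int p dvd 2 * (y^2 - 3)" using y by (rule dvd_mult)
          ultimately show "int p dvd (6 mod int p - y^2 * 2)" using dvd_diff by metis
        qed
        then have "sqm p 2" using sqm_cancel[OF assms(1) ny] by blast
        then show ?thesis using True by simp
      qed (use all0 that in auto)
      define f where "f = (\<lambda>x::nat. x^2 mod p)"
      define S where "S = {1..<p}"
      have fS: "f ` S \<subseteq> S"
      proof
        fix z assume "z \<in> f ` S"
        then obtain x where x: "x \<in> S" "z = x^2 mod p" unfolding f_def by auto
        have "\<not> p dvd x" using x unfolding S_def by (auto dest: dvd_imp_le)
        then have "\<not> p dvd x^2" using assms(1) prime_dvd_power by blast
        then have "z \<noteq> 0" using x by (simp add: dvd_eq_mod_eq_0)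
        moreover have "z < p" using x assms by simp
        ultimately show "z \<in> S" unfolding S_def by auto
      qed
      have Sf: "S \<subseteq> f ` S"
      proof
        fix m assume m: "m \<in> S"
        then have "sqm p (int m)" using all[of "int m"] unfolding S_def by auto
        then obtain x where x: "int p dvd (x^2 - int m)" unfolding sqm_def by auto
        define x0 where "x0 = nat (x mod int p)"
        have x0i: "int x0 = x mod int p" unfolding x0_def using p0 by simp
        have "[int x0 = x] (mod int p)" using x0i by (simp add: cong_def)
        then have "[int x0^2 = x^2] (mod int p)" using cong_pow by blast
        then have "[int x0^2 = int m] (mod int p)" using x
          by (simp add: cong_iff_dvd_diff dvd_trans_diff)
        then have "[x0^2 = m] (mod p)" by (metis cong_int_iff of_nat_power)
        then have fx: "f x0 = m" using m unfolding f_def S_def cong_def by simp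
        have "x0 \<noteq> 0" proof assume "x0 = 0" then show False using fx m unfolding f_def S_def by simp qed
        moreover have "x0 < p" using x0i p0
          by (smt (verit) Euclidean_Rings.pos_mod_bound of_nat_less_iff)
        ultimately have "x0 \<in> S" unfolding S_def by auto
        then show "m \<in> f ` S" using fx by blast
      qed
      have "f ` S = S" using fS Sf by blast
      then have "inj_on f S" using S_def by (simp add: eq_card_imp_inj_on)
      moreover have "1 \<in> S" "p - 1 \<in> S" "1 \<noteq> p - 1" using assms unfolding S_def by auto
      moreover have "f 1 = f (p - 1)"
      proof -
        have "(p - 1)^2 = p * (p - 2) + 1" using assms
          by (cases p) (auto simp: power2_eq_square algebra_simps)
        moreover have "(p * (p - 2) + 1) mod p = 1" using assms mod_mult_self4[of p "p-2" 1] by simp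
        ultimately show ?thesis unfolding f_def using assms by simp
      qed
      ultimately show False unfolding inj_on_def by blast
    qed
    then obtain x where x: "0 < x" "x < p" "\<not> sqm p (int x^2 + 2)" by blast
    have "\<not> sqm p (3 * (int x^2 + 2))"
    proof
      assume h: "sqm p (3 * (int x^2 + 2))"
      have "int p dvd (3 * (int x^2 + 2) - y^2 * (int x^2 + 2))"
      proof -
        have "3 * (int x^2 + 2) - y^2 * (int x^2 + 2) = - ((y^2 - 3) * (int x^2 + 2))"
          by (simp add: algebra_simps)
        then show ?thesis using y by simp
      qed
      then have "sqm p (y^2 * (int x^2 + 2))" using sqm_cong[OF h] by blast
      then show False using sqm_cancel[OF assms(1) ny] x(3) by blast
    qed
    then show ?thesis using x by blast
  qed
qed



definition hh :: "nat \<Rightarrow> complex \<Rightarrow> complex" where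
  "hh L x = x * (x + 2 - of_nat L)"

lemma K_id:
  fixes v :: complex
  shows "(1-v)^2 * (\<Sum>j<m+2. hh N (of_nat j) * v^j) =
    (3 - of_nat N)*v + 2*((\<Sum>j<m+2. v^j) - 1 - v) + (hh N (of_nat m) - 2*hh N (of_nat m + 1)) * v^(m+2)
     + hh N (of_nat m + 1) * v^(m+3)"
proof (induction m)
  case 0
  show ?case by (simp add: hh_def numeral_2_eq_2 power2_eq_square algebra_simps eval_nat_numeral)
next
  case (Suc m)
  have s1: "(\<Sum>j<Suc m+2. hh N (of_nat j) * v^j) = (\<Sum>j<m+2. hh N (of_nat j) * v^j) + hh N (of_nat (m + 2)) * v^(m+2)"
    by simp
  have s2: "(\<Sum>j<Suc m+2. v^j) = (\<Sum>j<m+2. v^j) + v^(m+2)" by simp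
  have "(1-v)^2 * (\<Sum>j<Suc m+2. hh N (of_nat j) * v^j) =
     (3 - of_nat N)*v + 2*((\<Sum>j<m+2. v^j) - 1 - v) + (hh N (of_nat m) - 2*hh N (of_nat m + 1)) * v^(m+2)
     + hh N (of_nat m + 1) * v^(m+3) + (1-v)^2 * hh N (of_nat (m + 2)) * v^(m+2)"
    unfolding s1 using Suc by (simp add: algebra_simps)
  also have "\<dots> = (3 - of_nat N)*v + 2*((\<Sum>j<Suc m+2. v^j) - 1 - v) + (hh N (of_nat (Suc m)) - 2*hh N (of_nat (Suc m) + 1)) * v^(Suc m+2)
     + hh N (of_nat (Suc m) + 1) * v^(Suc m+3)"
    unfolding s2 by (simp add: hh_def power_add algebra_simps power2_eq_square eval_nat_numeral)
  finally show ?case .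
qed

lemma K_root:
  fixes v :: complex
  assumes "2 \<le> l" "v^l = 1" "v \<noteq> 1"
  shows "(1-v)^2 * (\<Sum>j<l. hh l (of_nat j) * v^j) = - 2 * of_nat l"
proof -
  obtain m where m: "l = m + 2" using assms(1) by (metis add.commute le_Suc_ex)
  have g: "(\<Sum>j<l. v^j) = 0" using assms by (simp add: sum_gp_strict)
  have m2: "m + 2 = l" "m + 3 = Suc l" using m by auto
  have K: "(1-v)^2 * (\<Sum>j<l. hh l (of_nat j) * v^j) = (3 - of_nat l)*v + 2*((\<Sum>j<l. v^j) - 1 - v)
     + (hh l (of_nat m) - 2*hh l (of_nat m + 1)) * v^l + hh l (of_nat m + 1) * v^(Suc l)"
    using K_id[where v=v and m=m and N=l] unfolding m2 .
  have ol: "(of_nat l :: complex) = of_nat m + 2" using m by simp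
  have h0: "hh l (of_nat m) = 0" unfolding hh_def ol by simp
  have h1: "hh l (of_nat m + 1) = of_nat m + 1" unfolding hh_def ol by simp
  show ?thesis unfolding K g h0 h1 using assms(2) unfolding ol by (simp add: algebra_simps)
qed

lemma zeta_pow_eq1:
  assumes "prim_root_unity l \<zeta>"
  shows "\<zeta>^n = 1 \<longleftrightarrow> l dvd n"
proof -
  have l: "0 < l" "\<zeta>^l = 1" "\<And>k. 0 < k \<Longrightarrow> k < l \<Longrightarrow> \<zeta>^k \<noteq> 1"
    using assms unfolding prim_root_unity_def by auto
  have "\<zeta>^n = \<zeta>^(n mod l) * (\<zeta>^l)^(n div l)"
    by (metis mod_div_mult_eq power_add power_mult mult.commute)
  then have e: "\<zeta>^n = \<zeta>^(n mod l)" using l by simp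
  show ?thesis
  proof
    assume "\<zeta>^n = 1"
    then have "\<zeta>^(n mod l) = 1" using e by simp
    then have "n mod l = 0" using l(3)[of "n mod l"] l(1) by (meson mod_less_divisor neq0_conv)
    then show "l dvd n" by auto
  qed (use e in auto)
qed

lemma E_sum:
  assumes "prim_root_unity l \<zeta>"
  shows "(\<Sum>k\<in>{1..<l}. \<zeta>^(k*n)) = (if l dvd n then of_nat l else 0) - 1"
proof -
  have l: "0 < l" "\<zeta>^l = 1" using assms unfolding prim_root_unity_def by auto
  have a: "(\<Sum>k<l. (\<zeta>^n)^k) = (if l dvd n then of_nat l else 0)"
  proof (cases "l dvd n")
    case True
    then have "\<zeta>^n = 1" using zeta_pow_eq1[OF assms] by simp
    then show ?thesis using True by simp
  next
    case False
    then have "\<zeta>^n \<noteq> 1" using zeta_pow_eq1[OF assms] by simp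
    moreover have "(\<zeta>^n)^l = 1" using l by (metis power_mult mult.commute power_one)
    ultimately show ?thesis using False by (simp add: sum_gp_strict)
  qed
  have "{..<l} = insert 0 {1..<l}" using l by auto
  then have "(\<Sum>k<l. (\<zeta>^n)^k) = 1 + (\<Sum>k\<in>{1..<l}. (\<zeta>^n)^k)" by simp
  moreover have "\<And>k. (\<zeta>^n)^k = \<zeta>^(k*n)" by (metis power_mult mult.commute)
  ultimately show ?thesis using a by (simp add: algebra_simps)
qed

lemma hsum_gen:
  "(\<Sum>j<n. hh N (of_nat j)) = of_nat n * (of_nat n - 1) * (2 * of_nat n - 1) / 6 + (2 - of_nat N) * of_nat n * (of_nat n - 1) / 2"
  by (induction n) (simp_all add: hh_def field_simps)

lemma hsum:
  "(\<Sum>j<l. hh l (of_nat j)) = of_nat l * (of_nat l - 1) * (5 - of_nat l) / 6"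
  unfolding hsum_gen by (simp add: field_simps)



lemma uniq:
  assumes "prime l" "\<not> int l dvd int p" "j < l" "j' < l"
    "int l dvd (int p * int j + r)" "int l dvd (int p * int j' + r)"
  shows "j = j'"
proof (rule ccontr)
  assume ne: "j \<noteq> j'"
  have "int l dvd (int p * int j + r) - (int p * int j' + r)" using assms(5,6) by (rule dvd_diff)
  then have "int l dvd int p * (int j - int j')" by (simp add: algebra_simps)
  moreover have "prime (int l)" using assms(1) by simp
  ultimately have "int l dvd (int j - int j')" using assms(2) prime_dvd_mult_iff by blast
  moreover have "int j - int j' \<noteq> 0" using ne by simp
  ultimately have "\<bar>int l\<bar> \<le> \<bar>int j - int j'\<bar>" using dvd_imp_le_int by blast
  then show False using assms(3,4) by linarith
qed

lemma sum_if_unique: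
  fixes l :: nat
  assumes "j0 < l" "\<And>j. j < l \<Longrightarrow> P j \<longleftrightarrow> j = j0"
  shows "(\<Sum>j<l. if P j then f j else (0::complex)) = f j0"
proof -
  have "(\<Sum>j<l. if P j then f j else 0) = (\<Sum>j<l. if j = j0 then f j else 0)"
    using assms(2) by (intro sum.cong) auto
  also have "\<dots> = f j0" using assms(1) sum.delta[OF finite_lessThan[of l], of j0 f] by simp
  finally show ?thesis .
qed

lemma trace_formula:
  assumes "prime l" "prime p" "p \<ge> 5" "p < l" "prim_root_unity l \<zeta>"
  shows "\<exists>j::nat. j < l \<and> int l dvd (int p * int j + int p - 1) \<and>
     cyclo_trace l \<zeta> (\<lambda>z. (z ^ (p + 1) + z ^ (p - 1)) / (z ^ p - 1) ^ 2)
       = -(of_nat j * (of_nat j + 2 - of_nat l)) - (of_nat l - 1)*(of_nat l - 5)/6"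
proof -
  define F where "F = (\<lambda>z::complex. (z ^ (p + 1) + z ^ (p - 1)) / (z ^ p - 1) ^ 2)"
  define S where "S = {1..<l}"
  have l2: "l \<ge> 2" using assms(1) prime_ge_2_nat by blast
  have lp: "\<not> l dvd p" using assms(3,4) by (auto dest: dvd_imp_le)
  have lpi: "\<not> int l dvd int p" using lp by simp
  have setS: "{k. k < l \<and> coprime k l} = S"
  proof -
    have "coprime k l \<longleftrightarrow> k \<noteq> 0" if "k < l" for k
    proof
      assume c: "coprime k l" show "k \<noteq> 0"
      proof
        assume "k = 0" then show False using c l2 by simp
      qed
    next
      assume "k \<noteq> 0"
      then have "\<not> l dvd k" using that by (auto dest: dvd_imp_le)
      then have "coprime l k" using assms(1) prime_imp_coprime by blast
      then show "coprime k l" by (simp add: coprime_commute)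
    qed
    then show ?thesis unfolding S_def by auto
  qed
  define n1 where "n1 = (\<lambda>j. p*j+p+1)"
  define n2 where "n2 = (\<lambda>j. p*j+p-1)"
  have termk: "F (\<zeta>^k) = -(1/(2*of_nat l)) * (\<Sum>j<l. hh l (of_nat j) * (\<zeta>^(k*n1 j) + \<zeta>^(k*n2 j)))"
    if k: "k \<in> S" for k
  proof -
    define w where "w = \<zeta>^k"
    define v where "v = \<zeta>^(k*p)"
    have wv: "w^p = v" unfolding w_def v_def by (simp add: power_mult)
    have "\<not> l dvd k" using k unfolding S_def by (auto dest: dvd_imp_le)
    then have "\<not> l dvd k*p" using lp assms(1) prime_dvd_mult_iff by blast
    then have v1: "v \<noteq> 1" unfolding v_def using zeta_pow_eq1[OF assms(5)] by simp
    have vl: "v^l = 1" unfolding v_def using zeta_pow_eq1[OF assms(5), of "k*p*l"]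
      by (simp add: power_mult[symmetric])
    have K: "(1-v)^2 * (\<Sum>j<l. hh l (of_nat j) * v^j) = - 2 * of_nat l"
      using K_root[OF l2 vl v1] .
    have nz: "(1-v)^2 \<noteq> 0" using v1 by simp
    have Ksum: "(\<Sum>j<l. hh l (of_nat j) * v^j) = - 2 * of_nat l / (1-v)^2"
      using K nz by (simp add: field_simps)
    have e1: "\<zeta>^(k*n1 j) = w^(p+1) * v^j" for j
    proof -
      have "k * n1 j = k*(p+1) + k*p*j" unfolding n1_def by (simp add: algebra_simps)
      then show ?thesis unfolding w_def v_def by (simp add: power_add power_mult)
    qed
    have e2: "\<zeta>^(k*n2 j) = w^(p-1) * v^j" for j
    proof -
      have "k * n2 j = k*(p-1) + k*p*j" unfolding n2_def using assms(3)
        by (cases p) (auto simp: algebra_simps)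
      then show ?thesis unfolding w_def v_def by (simp add: power_add power_mult)
    qed
    have "(\<Sum>j<l. hh l (of_nat j) * (\<zeta>^(k*n1 j) + \<zeta>^(k*n2 j)))
        = (w^(p+1) + w^(p-1)) * (\<Sum>j<l. hh l (of_nat j) * v^j)"
      unfolding e1 e2 sum_distrib_left by (intro sum.cong) (auto simp: algebra_simps)
    also have "\<dots> = (w^(p+1) + w^(p-1)) * (- 2 * of_nat l / (1-v)^2)" unfolding Ksum ..
    finally have X: "(\<Sum>j<l. hh l (of_nat j) * (\<zeta>^(k*n1 j) + \<zeta>^(k*n2 j)))
        = (w^(p+1) + w^(p-1)) * (- 2 * of_nat l / (1-v)^2)" .
    have lnz: "(of_nat l :: complex) \<noteq> 0" using l2 by simp
    have "-(1/(2*of_nat l)) * (\<Sum>j<l. hh l (of_nat j) * (\<zeta>^(k*n1 j) + \<zeta>^(k*n2 j)))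
        = (w^(p+1) + w^(p-1)) / (1-v)^2" unfolding X using lnz nz by (simp add: field_simps)
    moreover have "F w = (w^(p+1) + w^(p-1)) / (1-v)^2" unfolding F_def wv
      by (simp add: power2_commute)
    ultimately show ?thesis unfolding w_def by simp
  qed
  have "cyclo_trace l \<zeta> F = (\<Sum>k\<in>S. F (\<zeta>^k))" unfolding cyclo_trace_def setS ..
  also have "\<dots> = (\<Sum>k\<in>S. -(1/(2*of_nat l)) * (\<Sum>j<l. hh l (of_nat j) * (\<zeta>^(k*n1 j) + \<zeta>^(k*n2 j))))"
    using termk by (rule sum.cong[OF refl])
  also have "\<dots> = -(1/(2*of_nat l)) * (\<Sum>j<l. hh l (of_nat j) * ((\<Sum>k\<in>S. \<zeta>^(k*n1 j)) + (\<Sum>k\<in>S. \<zeta>^(k*n2 j))))"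
  proof -
    have "(\<Sum>k\<in>S. -(1/(2*of_nat l)) * (\<Sum>j<l. hh l (of_nat j) * (\<zeta>^(k*n1 j) + \<zeta>^(k*n2 j))))
      = -(1/(2*of_nat l)) * (\<Sum>k\<in>S. \<Sum>j<l. hh l (of_nat j) * (\<zeta>^(k*n1 j) + \<zeta>^(k*n2 j)))"
      by (simp add: sum_distrib_left)
    also have "(\<Sum>k\<in>S. \<Sum>j<l. hh l (of_nat j) * (\<zeta>^(k*n1 j) + \<zeta>^(k*n2 j)))
       = (\<Sum>j<l. \<Sum>k\<in>S. hh l (of_nat j) * (\<zeta>^(k*n1 j) + \<zeta>^(k*n2 j)))"
      by (rule sum.swap)
    also have "\<dots> = (\<Sum>j<l. hh l (of_nat j) * ((\<Sum>k\<in>S. \<zeta>^(k*n1 j)) + (\<Sum>k\<in>S. \<zeta>^(k*n2 j))))"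
      by (simp add: sum_distrib_left[symmetric] sum.distrib)
    finally show ?thesis .
  qed
  also have "\<dots> = -(1/(2*of_nat l)) * (\<Sum>j<l. hh l (of_nat j) *
       ((if l dvd n1 j then of_nat l else 0) + (if l dvd n2 j then of_nat l else 0) - 2))"
    unfolding S_def E_sum[OF assms(5)] by (simp add: algebra_simps)
  also have "\<dots> = -(1/(2*of_nat l)) * ((\<Sum>j<l. if l dvd n1 j then of_nat l * hh l (of_nat j) else 0)
      + (\<Sum>j<l. if l dvd n2 j then of_nat l * hh l (of_nat j) else 0) - 2 * (\<Sum>j<l. hh l (of_nat j)))"
  proof -
    have "(\<Sum>j<l. hh l (of_nat j) *
       ((if l dvd n1 j then of_nat l else 0) + (if l dvd n2 j then of_nat l else 0) - 2))
      = (\<Sum>j<l. (if l dvd n1 j then of_nat l * hh l (of_nat j) else 0)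
           + (if l dvd n2 j then of_nat l * hh l (of_nat j) else 0) - 2 * hh l (of_nat j))"
      by (rule sum.cong) (auto simp: algebra_simps)
    then show ?thesis by (simp add: sum.distrib sum_subtractf sum_distrib_left)
  qed
  finally have T1: "cyclo_trace l \<zeta> F = -(1/(2*of_nat l)) * ((\<Sum>j<l. if l dvd n1 j then of_nat l * hh l (of_nat j) else 0)
      + (\<Sum>j<l. if l dvd n2 j then of_nat l * hh l (of_nat j) else 0) - 2 * (\<Sum>j<l. hh l (of_nat j)))" .
  have "coprime l p" using assms(1) lp prime_imp_coprime by blast
  then have cop: "coprime (int p) (int l)" by (simp add: coprime_commute)
  obtain x where x: "[int p * x = 1] (mod int l)" using cong_solve_coprime_int[OF cop] by blast
  define c where "c = x mod int l"
  have c0: "0 \<le> c" "c < int l" unfolding c_def using l2 by auto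
  have "[c = x] (mod int l)" unfolding c_def by (simp add: cong_def)
  then have "[int p * c = int p * x] (mod int l)" by (rule cong_scalar_left)
  then have "[int p * c = 1] (mod int l)" using x by (rule cong_trans)
  then have dc: "int l dvd (int p * c - 1)" by (simp add: cong_iff_dvd_diff)
  have cnz: "c \<noteq> 0"
  proof
    assume "c = 0"
    then have "int l dvd 1" using dc by simp
    then show False using l2 by simp
  qed
  define j2 where "j2 = nat (c - 1)"
  have j2i: "int j2 = c - 1" unfolding j2_def using c0 cnz by simp
  define j1 where "j1 = nat (int l - 1 - c)"
  have j1i: "int j1 = int l - 1 - c" unfolding j1_def using c0 by simp
  have j12: "j1 + j2 + 2 = l" using j1i j2i by linarith
  have j1l: "j1 < l" "j2 < l" using j12 by auto
  have d2: "int l dvd (int p * int j2 + (int p - 1))"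
  proof -
    have ce: "c = int j2 + 1" using j2i by simp
    have e: "int p * int j2 + (int p - 1) = int p * c - 1" unfolding ce by (simp add: algebra_simps)
    show ?thesis unfolding e using dc .
  qed
  have d1: "int l dvd (int p * int j1 + (int p + 1))"
  proof -
    have le: "int l = int j1 + 1 + c" using j1i by simp
    have e: "int p * int j1 + (int p + 1) = int l * int p - (int p * c - 1)"
      unfolding le by (simp add: algebra_simps)
    have "int l dvd int l * int p - (int p * c - 1)" using dc by (simp add: dvd_diff)
    then show ?thesis unfolding e .
  qed
  have n2i: "int (n2 j) = int p * int j + (int p - 1)" for j
    unfolding n2_def using assms(3) by (simp add: of_nat_diff)
  have n1i: "int (n1 j) = int p * int j + (int p + 1)" for j
    unfolding n1_def by simp
  have c2: "l dvd n2 j \<longleftrightarrow> j = j2" if "j < l" for j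
  proof
    assume "l dvd n2 j"
    then have "int l dvd int (n2 j)" by simp
    then have "int l dvd int p * int j + (int p - 1)" unfolding n2i .
    then show "j = j2" using uniq[OF assms(1) lpi that j1l(2) _ d2] by blast
  next
    assume "j = j2"
    then have "int l dvd int (n2 j)" unfolding n2i using d2 by simp
    then show "l dvd n2 j" by simp
  qed
  have c1: "l dvd n1 j \<longleftrightarrow> j = j1" if "j < l" for j
  proof
    assume "l dvd n1 j"
    then have "int l dvd int (n1 j)" by simp
    then have "int l dvd int p * int j + (int p + 1)" unfolding n1i .
    then show "j = j1" using uniq[OF assms(1) lpi that j1l(1) _ d1] by blast
  next
    assume "j = j1"
    then have "int l dvd int (n1 j)" unfolding n1i using d1 by simp
    then show "l dvd n1 j" by simp
  qed
  have s1: "(\<Sum>j<l. if l dvd n1 j then of_nat l * hh l (of_nat j) else 0) = of_nat l * hh l (of_nat j1)"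
    using sum_if_unique[OF j1l(1) c1] .
  have s2: "(\<Sum>j<l. if l dvd n2 j then of_nat l * hh l (of_nat j) else 0) = of_nat l * hh l (of_nat j2)"
    using sum_if_unique[OF j1l(2) c2] .
  have ol: "(of_nat l :: complex) = of_nat j1 + of_nat j2 + 2" using j12 by (metis of_nat_add of_nat_numeral)
  have hheq: "hh l (of_nat j1) = hh l (of_nat j2)" unfolding hh_def ol by (simp add: algebra_simps)
  have lnz: "(of_nat l :: complex) \<noteq> 0" using l2 by simp
  have "cyclo_trace l \<zeta> F = -(of_nat j2 * (of_nat j2 + 2 - of_nat l)) - (of_nat l - 1)*(of_nat l - 5)/6"
    unfolding T1 s1 s2 hsum hheq using lnz by (simp add: hh_def field_simps)
  then show ?thesis using j1l(2) d2 unfolding F_def by (intro exI[of _ j2]) (simp add: algebra_simps)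
qed


lemma padic_from_int:
  assumes "prime p" "p \<ge> 5" "(6::rat) * q = of_int N" "\<not> int p dvd N"
  shows "padic_unit p q"
proof -
  obtain n d where qd: "quotient_of q = (n, d)" by (cases "quotient_of q") auto
  have d0: "d > 0" using qd quotient_of_denom_pos by blast
  have cp: "coprime n d" using qd quotient_of_coprime by blast
  have qv: "q = of_int n / of_int d" using qd quotient_of_div by blast
  have "(6::rat) * (of_int n / of_int d) = of_int N" using assms(3) qv by simp
  then have "(of_int (6 * n) :: rat) = of_int (N * d)" using d0 by (simp add: field_simps)
  then have e: "6 * n = N * d" using of_int_eq_iff by blast
  have "d dvd 6 * n" unfolding e by simp
  moreover have "coprime d n" using cp by (simp add: coprime_commute)
  ultimately have d6: "d dvd 6" using coprime_dvd_mult_left_iff by blast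
  have n6: "\<not> int p dvd 6"
  proof
    assume "int p dvd 6"
    then have "p dvd 6" by presburger
    then have "p \<le> 6" by (simp add: dvd_imp_le)
    then have "p = 5 \<or> p = 6" using assms(2) by auto
    then show False using \<open>p dvd 6\<close> assms(1) by auto
  qed
  have nd: "\<not> int p dvd d" using d6 n6 dvd_trans by blast
  have nn: "\<not> int p dvd n"
  proof
    assume "int p dvd n"
    then have "int p dvd N * d" unfolding e[symmetric] by simp
    moreover have "prime (int p)" using assms(1) by simp
    ultimately show False using nd assms(4) prime_dvd_mult_iff by blast
  qed
  show ?thesis unfolding padic_unit_def qd using nd nn by simp
qed

theorem lemma3p4:
  fixes p :: nat
  assumes "prime p" and "p \<ge> 5"
  shows "\<exists>a::nat. 0 < a \<and> a < p \<and>
    (\<forall>l::nat. prime l \<and> l \<ge> p ^ 2 \<and> l mod p = a \<longrightarrow>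
      (\<forall>\<zeta>::complex. prim_root_unity l \<zeta> \<longrightarrow>
        (\<exists>q::rat. cyclo_trace l \<zeta> (\<lambda>z. (z ^ (p + 1) + z ^ (p - 1)) / (z ^ p - 1) ^ 2) = of_rat q
                 \<and> padic_unit p q)))"
proof -
  obtain a where a: "0 < a" "a < p" "\<not> sqm p (3 * (int a^2 + 2))" using exists_a[OF assms] by blast
  have main: "\<exists>q::rat. cyclo_trace l \<zeta> (\<lambda>z. (z ^ (p + 1) + z ^ (p - 1)) / (z ^ p - 1) ^ 2) = of_rat q
                 \<and> padic_unit p q"
    if l: "prime l" "l \<ge> p^2" "l mod p = a" and z: "prim_root_unity l \<zeta>" for l \<zeta>
  proof -
    have "p < p^2" using assms(2) by (simp add: power2_eq_square)
    then have pl: "p < l" using l(2) by linarith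
    obtain j where j: "j < l" "cyclo_trace l \<zeta> (\<lambda>z. (z ^ (p + 1) + z ^ (p - 1)) / (z ^ p - 1) ^ 2)
       = -(of_nat j * (of_nat j + 2 - of_nat l)) - (of_nat l - 1)*(of_nat l - 5)/6"
      using trace_formula[OF l(1) assms pl z] by blast
    define q :: rat where "q = -(of_nat j * (of_nat j + 2 - of_nat l)) - (of_nat l - 1)*(of_nat l - 5)/6"
    have tq: "cyclo_trace l \<zeta> (\<lambda>z. (z ^ (p + 1) + z ^ (p - 1)) / (z ^ p - 1) ^ 2) = of_rat q"
      unfolding j(2) q_def by (simp add: of_rat_add of_rat_mult of_rat_diff of_rat_divide of_rat_minus)
    define N :: int where "N = -6 * (int j * (int j + 2 - int l)) - (int l - 1) * (int l - 5)"
    have qN: "6 * q = of_int N" unfolding q_def N_def by (simp add: field_simps)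
    have "\<not> int p dvd N"
    proof
      assume "int p dvd N"
      then have d1: "int p dvd (-6 * N)" by simp
      define X where "X = 6 * int j + 6 - 3 * int l"
      have "-6 * N = X^2 - 3 * (int l^2 + 2)" unfolding N_def X_def by (simp add: algebra_simps power2_eq_square)
      then have d2: "int p dvd (X^2 - 3 * (int l^2 + 2))" using d1 by simp
      have "int l = int p * int (l div p) + int a" using l(3)
        by (metis div_mult_mod_eq of_nat_add of_nat_mult mult.commute)
      then have "int p dvd (int l - int a)" by simp
      then have "int p dvd (int l - int a) * (int l + int a)" by (rule dvd_mult2)
      then have "int p dvd 3 * ((int l - int a) * (int l + int a))" by (rule dvd_mult)
      then have d3: "int p dvd (X^2 - 3 * (int l^2 + 2)) + 3 * ((int l - int a) * (int l + int a))"
        using d2 by (rule dvd_add[rotated])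
      have e: "(X^2 - 3 * (int l^2 + 2)) + 3 * ((int l - int a) * (int l + int a)) = (X^2 - 3 * (int a^2 + 2))"
        by (simp add: algebra_simps power2_eq_square)
      have "int p dvd (X^2 - 3 * (int a^2 + 2))" using d3 unfolding e .
      then have "sqm p (3 * (int a^2 + 2))" unfolding sqm_def by blast
      then show False using a(3) by simp
    qed
    then have "padic_unit p q" using padic_from_int[OF assms qN] by blast
    then show ?thesis using tq by blast
  qed
  show ?thesis using a(1,2) main by blast
qed


end
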